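(* (1) If $(\alpha^*,u^* )$ is an inverse Stackelberg solution, then with $u_0^*=\alpha^*[u^*]$ the pair $(u_0^*,u^* )$ belongs to $\mathcal{B}$ and maximizes $J_0$ over $\mathcal{B}$. (2) If $(u_0^*,u^* )\in\mathcal{B}$ maximizes $J_0$ over $\mathcal{B}$, then there exists an incentive strategy $\alpha^*$ with $\alpha^*[u^*]=u_0^*$ such that $(\alpha^*,u^* )$ is an inverse Stackelberg solution. (3) Suppose in addition that each $P_i$, $i=1,\dots,n$, is a nonempty convex compact subset of a Euclidean space and that for every $i=1,\dots,n$, every $u_0\in P_0$ and every $u_{-i}$, the function $u_i'\mapsto J_i(u_0,u_i',u_{-i})$ is quasiconcave on $P_i$. Then there exists at least one inverse Stackelberg solution.
   Context: Static game with a leader (player $0$) and followers $1,\dots,n$. Each $P_i$ ($i=0,\dots,n$) is a nonempty compact metric space and each payoff $J_i:P_0\times P_1\times\dots\times P_n\to\mathbb{R}$ ($i=0,\dots,n$) is continuous; each player maximizes. Let $P=P_1\times\dots\times P_n$; elements $u=(u_1,\dots,u_n)\in P$ are profiles of followers' strategies, and for $u_i'\in P_i$, $(u_i',u_{-i})$ denotes $u$ with the $i$-th component replaced by $u_i'$. Write $J_i(u_0,u)=J_i(u_0,u_1,\dots,u_n)$. An incentive strategy of the leader is an arbitrary map $\alpha:P\to P_0$. The set of followers' Nash equilibria against $\alpha$ is $\mathcal{E}(\alpha)=\{u\in P: J_i(\alpha[u],u)\ge J_i(\alpha[(u_i',u_{-i})],(u_i',u_{-i}))\ \text{for all } i=1,\dots,n,\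 u_i'\in P_i\}$. A pair $(\alpha^*,u^* )$ is an inverse Stackelberg solution if $u^*\in\mathcal{E}(\alpha^* )$ and $J_0(\alpha^*[u^*],u^* )=\sup_{\alpha}\sup_{u\in\mathcal{E}(\alpha)}J_0(\alpha[u],u)$ (supremum over all incentive strategies, $\sup\emptyset=-\infty$). Define $\mathcal{B}=\{(u_0,u)\in P_0\times P: J_i(u_0,u)\ge\max_{u_i'\in P_i}\min_{u_0'\in P_0}J_i(u_0',u_i',u_{-i})\ \text{for } i=1,\dots,n\}$. *)

theory Defs
  imports "HOL-Analysis.Analysis"
begin

text \<open>Followers are indexed by 1..n; the leader by 0. A profile of followers'
strategies is an extensional function on {1..n}; the i-th component of u is u i,
and (u_i', u_{-i}) is written u(i := v).\<close>

definition profiles :: "nat \<Rightarrow> (nat \<Rightarrow> 'b set) \<Rightarrow> (nat \<Rightarrow> 'b) set" where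
  "profiles n P = PiE {1..n} P"

definition game :: "nat \<Rightarrow> 'a::metric_space set \<Rightarrow> (nat \<Rightarrow> 'b::metric_space set)
    \<Rightarrow> (nat \<Rightarrow> 'a \<Rightarrow> (nat \<Rightarrow> 'b) \<Rightarrow> real) \<Rightarrow> bool" where
  "game n P0 P J \<longleftrightarrow> 1 \<le> n \<and> P0 \<noteq> {} \<and> compact P0 \<and>
     (\<forall>i\<in>{1..n}. P i \<noteq> {} \<and> compact (P i)) \<and>
     (\<forall>i\<in>{0..n}. continuous_on (P0 \<times> profiles n P) (\<lambda>(u0, u). J i u0 u))"

definition incentive :: "nat \<Rightarrow> 'a set \<Rightarrow> (nat \<Rightarrow> 'b set) \<Rightarrow> ((nat \<Rightarrow> 'b) \<Rightarrow> 'a) \<Rightarrow> bool" where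
  "incentive n P0 P \<alpha> \<longleftrightarrow> \<alpha> \<in> profiles n P \<rightarrow> P0"

definition NashSet :: "nat \<Rightarrow> (nat \<Rightarrow> 'b set) \<Rightarrow> (nat \<Rightarrow> 'a \<Rightarrow> (nat \<Rightarrow> 'b) \<Rightarrow> real)
    \<Rightarrow> ((nat \<Rightarrow> 'b) \<Rightarrow> 'a) \<Rightarrow> (nat \<Rightarrow> 'b) set" where
  "NashSet n P J \<alpha> = {u \<in> profiles n P. \<forall>i\<in>{1..n}. \<forall>v\<in>P i.
       J i (\<alpha> u) u \<ge> J i (\<alpha> (u(i := v))) (u(i := v))}"

definition inv_stackelberg :: "nat \<Rightarrow> 'a set \<Rightarrow> (nat \<Rightarrow> 'b set)
    \<Rightarrow> (nat \<Rightarrow> 'a \<Rightarrow> (nat \<Rightarrow> 'b) \<Rightarrow> real) \<Rightarrow> ((nat \<Rightarrow> 'b) \<Rightarrow> 'a) \<Rightarrow> (nat \<Rightarrow> 'b) \<Rightarrow> bool" where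
  "inv_stackelberg n P0 P J \<alpha> u \<longleftrightarrow> incentive n P0 P \<alpha> \<and> u \<in> NashSet n P J \<alpha> \<and>
     ereal (J 0 (\<alpha> u) u) =
       (SUP \<beta>\<in>{\<beta>. incentive n P0 P \<beta>}. SUP w\<in>NashSet n P J \<beta>. ereal (J 0 (\<beta> w) w))"

definition Bset :: "nat \<Rightarrow> 'a set \<Rightarrow> (nat \<Rightarrow> 'b set)
    \<Rightarrow> (nat \<Rightarrow> 'a \<Rightarrow> (nat \<Rightarrow> 'b) \<Rightarrow> real) \<Rightarrow> ('a \<times> (nat \<Rightarrow> 'b)) set" where
  "Bset n P0 P J = {(u0, u). u0 \<in> P0 \<and> u \<in> profiles n P \<and>
     (\<forall>i\<in>{1..n}. J i u0 u \<ge> (SUP v\<in>P i. INF w\<in>P0. J i w (u(i := v))))}"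

definition maximizes_on_B where
  "maximizes_on_B n P0 P J u0 u \<longleftrightarrow> (u0, u) \<in> Bset n P0 P J \<and>
     (\<forall>(w0, w)\<in>Bset n P0 P J. J 0 w0 w \<le> J 0 u0 u)"

definition quasiconcave_on :: "'c::real_vector set \<Rightarrow> ('c \<Rightarrow> real) \<Rightarrow> bool" where
  "quasiconcave_on S f \<longleftrightarrow> (\<forall>x\<in>S. \<forall>y\<in>S. \<forall>t\<in>{0..1}.
     min (f x) (f y) \<le> f ((1 - t) *\<^sub>R x + t *\<^sub>R y))"

end

theory Submission
  imports Defs
begin


lemma tendsto_fun_iff:
  fixes f :: "'x \<Rightarrow> 'i \<Rightarrow> 'b::topological_space"
  shows "(f \<longlongrightarrow> l) F \<longleftrightarrow> (\<forall>i. ((\<lambda>c. f c i) \<longlongrightarrow> l i) F)"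
proof -
  have "(f \<longlongrightarrow> l) F \<longleftrightarrow> limitin (product_topology (\<lambda>i. euclidean) UNIV) f l F"
    by (simp add: euclidean_product_topology)
  also have "\<dots> \<longleftrightarrow> (\<forall>i. ((\<lambda>c. f c i) \<longlongrightarrow> l i) F)"
    by (simp add: limitin_componentwise)
  finally show ?thesis .
qed

lemma compact_cube_nat:
  "compact {x::nat\<Rightarrow>real. (\<forall>i<n. 0 \<le> x i \<and> x i \<le> 1) \<and> (\<forall>i\<ge>n. x i = 0)}"
proof -
  have eq: "{x::nat\<Rightarrow>real. (\<forall>i<n. 0 \<le> x i \<and> x i \<le> 1) \<and> (\<forall>i\<ge>n. x i = 0)}
     = PiE UNIV (\<lambda>i. if i < n then {0..1} else {0})"
    by (auto simp: PiE_def Pi_def not_less)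
  have "compactin (product_topology (\<lambda>i. euclidean) UNIV) (PiE UNIV (\<lambda>i. if i < n then {0..1::real} else {0}))"
    by (subst compactin_PiE) auto
  then show ?thesis unfolding eq by (simp add: euclidean_product_topology)
qed



lemma brouwer_nat:
  fixes n :: nat and f :: "(nat \<Rightarrow> real) \<Rightarrow> (nat \<Rightarrow> real)"
  defines "C \<equiv> {x::nat\<Rightarrow>real. (\<forall>i<n. 0 \<le> x i \<and> x i \<le> 1) \<and> (\<forall>i\<ge>n. x i = 0)}"
  assumes cont: "continuous_on C f" and fC: "f ` C \<subseteq> C"
  shows "\<exists>x\<in>C. f x = x"
proof -
  define label :: "(nat \<Rightarrow> real) \<Rightarrow> nat \<Rightarrow> nat" where
    "label x i = (if x i = 0 then 0 else if x i = 1 then 1 else if x i \<le> f x i then 0 else 1)" for x i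
  have fCi: "0 \<le> f x i \<and> f x i \<le> 1" if "x \<in> C" "i < n" for x i
    using fC that unfolding C_def by auto
  have fCo: "f x i = 0" if "x \<in> C" "n \<le> i" for x i
    using fC that unfolding C_def by auto
  have lem1: "\<bar>f x i - x i\<bar> \<le> \<bar>f y i - f x i\<bar> + \<bar>y i - x i\<bar>"
    if "x \<in> C" "y \<in> C" "i < n" "label x i \<noteq> label y i" for x y i
  proof -
    have lx0: "x i \<le> f x i" if "label x i = 0" using that fCi[OF \<open>x\<in>C\<close> \<open>i<n\<close>]
      unfolding label_def by (auto split: if_splits)
    have lx1: "f x i \<le> x i" if "label x i \<noteq> 0" using that fCi[OF \<open>x\<in>C\<close> \<open>i<n\<close>]
      unfolding label_def by (auto split: if_splits)
    have ly0: "y i \<le> f y i" if "label y i = 0" using that fCi[OF \<open>y\<in>C\<close> \<open>i<n\<close>]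
      unfolding label_def by (auto split: if_splits)
    have ly1: "f y i \<le> y i" if "label y i \<noteq> 0" using that fCi[OF \<open>y\<in>C\<close> \<open>i<n\<close>]
      unfolding label_def by (auto split: if_splits)
    show ?thesis
    proof (cases "label x i = 0")
      case True
      then have "label y i \<noteq> 0" using that by auto
      then show ?thesis using lx0[OF True] ly1 by linarith
    next
      case False
      then have "label y i = 0" using that label_def by (auto split: if_splits)
      then show ?thesis using lx1[OF False] ly0 by linarith
    qed
  qed
  define emb :: "nat \<Rightarrow> (nat \<Rightarrow> nat) \<Rightarrow> nat \<Rightarrow> real" where
    "emb p r = (\<lambda>k. if k < n then real (r k) / real p else 0)" for p r
  have emb_C: "emb p r \<in> C" if "p > 0" "\<forall>i<n. r i \<le> p" for p r
    using that unfolding C_def emb_def by (auto simp: divide_le_eq_1)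
  have step: "\<exists>z\<in>C. \<forall>i<n. \<exists>r\<in>C. \<exists>s\<in>C. (\<forall>j. \<bar>r j - z j\<bar> \<le> 1 / real p) \<and>
                 (\<forall>j. \<bar>s j - z j\<bar> \<le> 1 / real p) \<and> label r i \<noteq> label s i"
    if p0: "p > 0" for p
  proof -
    have q1: "\<forall>x. (\<forall>i<n. x i \<le> p) \<longrightarrow> (\<forall>i<n. label (emb p x) i = 0 \<or> label (emb p x) i = 1)"
      unfolding label_def by auto
    have q2: "\<forall>x. (\<forall>i<n. x i \<le> p) \<longrightarrow> (\<forall>i<n. x i = 0 \<longrightarrow> label (emb p x) i = 0)"
      unfolding label_def emb_def by auto
    have q3: "\<forall>x. (\<forall>i<n. x i \<le> p) \<longrightarrow> (\<forall>i<n. x i = p \<longrightarrow> label (emb p x) i = 1)"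
      using p0 unfolding label_def emb_def by auto
    obtain q where q: "\<forall>i<n. q i < p"
      "\<forall>i<n. \<exists>r s. (\<forall>j<n. q j \<le> r j \<and> r j \<le> q j + 1) \<and> (\<forall>j<n. q j \<le> s j \<and> s j \<le> q j + 1)
           \<and> label (emb p r) i \<noteq> label (emb p s) i"
      using kuhn_lemma[where p=p and n=n and label="\<lambda>x i. label (emb p x) i", OF p0 q1 q2 q3] by blast
    have close: "\<bar>emb p r j - emb p q j\<bar> \<le> 1 / real p" if "\<forall>j<n. q j \<le> r j \<and> r j \<le> q j + 1" for r j
    proof (cases "j < n")
      case True
      then have "q j \<le> r j" "r j \<le> q j + 1" using that by auto
      then have "\<bar>real (r j) - real (q j)\<bar> \<le> 1" by linarith
      then have "\<bar>real (r j) - real (q j)\<bar> / real p \<le> 1 / real p"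
        by (simp add: divide_right_mono)
      then show ?thesis using True \<open>p>0\<close> unfolding emb_def by (simp add: diff_divide_distrib[symmetric])
    next
      case False
      then show ?thesis unfolding emb_def by simp
    qed
    show ?thesis
    proof (rule bexI[of _ "emb p q"])
      show "\<forall>i<n. \<exists>r\<in>C. \<exists>s\<in>C. (\<forall>j. \<bar>r j - emb p q j\<bar> \<le> 1 / real p) \<and>
                 (\<forall>j. \<bar>s j - emb p q j\<bar> \<le> 1 / real p) \<and> label r i \<noteq> label s i"
      proof (intro allI impI)
      fix i assume "i < n"
      then obtain r s where rs: "\<forall>j<n. q j \<le> r j \<and> r j \<le> q j + 1" "\<forall>j<n. q j \<le> s j \<and> s j \<le> q j + 1"
           "label (emb p r) i \<noteq> label (emb p s) i" using q(2) by blast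
      have "emb p r \<in> C" "emb p s \<in> C"
        using rs(1,2) q(1) \<open>p>0\<close> by (auto intro!: emb_C) (metis Suc_eq_plus1 Suc_leI le_trans)+
      then show "\<exists>r\<in>C. \<exists>s\<in>C. (\<forall>j. \<bar>r j - emb p q j\<bar> \<le> 1 / real p) \<and>
                 (\<forall>j. \<bar>s j - emb p q j\<bar> \<le> 1 / real p) \<and> label r i \<noteq> label s i"
        using close rs by blast
      qed
    next
      show "emb p q \<in> C" using q(1) \<open>p>0\<close> by (auto intro!: emb_C less_imp_le)
    qed
  qed
  have "\<forall>k. \<exists>z\<in>C. \<forall>i<n. \<exists>r\<in>C. \<exists>s\<in>C. (\<forall>j. \<bar>r j - z j\<bar> \<le> 1 / real (Suc k)) \<and>
                 (\<forall>j. \<bar>s j - z j\<bar> \<le> 1 / real (Suc k)) \<and> label r i \<noteq> label s i"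
    using step by blast
  then have "\<exists>Z. \<forall>k. Z k \<in> C \<and> (\<forall>i<n. \<exists>r\<in>C. \<exists>s\<in>C. (\<forall>j. \<bar>r j - Z k j\<bar> \<le> 1 / real (Suc k)) \<and>
                 (\<forall>j. \<bar>s j - Z k j\<bar> \<le> 1 / real (Suc k)) \<and> label r i \<noteq> label s i)"
    by (subst (asm) Bex_def) (rule choice)
  then obtain Z where Z0: "\<forall>k. Z k \<in> C \<and> (\<forall>i<n. \<exists>r\<in>C. \<exists>s\<in>C. (\<forall>j. \<bar>r j - Z k j\<bar> \<le> 1 / real (Suc k)) \<and>
                 (\<forall>j. \<bar>s j - Z k j\<bar> \<le> 1 / real (Suc k)) \<and> label r i \<noteq> label s i)"
    by blast
  have Z1: "Z k \<in> C" for k using Z0 by blast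
  have "\<forall>k i. \<exists>rs. i < n \<longrightarrow> fst rs \<in> C \<and> snd rs \<in> C \<and> (\<forall>j. \<bar>fst rs j - Z k j\<bar> \<le> 1 / real (Suc k)) \<and>
                 (\<forall>j. \<bar>snd rs j - Z k j\<bar> \<le> 1 / real (Suc k)) \<and> label (fst rs) i \<noteq> label (snd rs) i"
  proof (intro allI)
    fix k i
    show "\<exists>rs. i < n \<longrightarrow> fst rs \<in> C \<and> snd rs \<in> C \<and> (\<forall>j. \<bar>fst rs j - Z k j\<bar> \<le> 1 / real (Suc k)) \<and>
                 (\<forall>j. \<bar>snd rs j - Z k j\<bar> \<le> 1 / real (Suc k)) \<and> label (fst rs) i \<noteq> label (snd rs) i"
    proof (cases "i < n")
      case True
      then obtain r s where "r \<in> C" "s \<in> C" "\<forall>j. \<bar>r j - Z k j\<bar> \<le> 1 / real (Suc k)"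
        "\<forall>j. \<bar>s j - Z k j\<bar> \<le> 1 / real (Suc k)" "label r i \<noteq> label s i"
        using Z0 by meson
      then show ?thesis by (intro exI[of _ "(r, s)"]) simp
    qed simp
  qed
  then have "\<exists>RS. \<forall>k i. i < n \<longrightarrow> fst (RS k i) \<in> C \<and> snd (RS k i) \<in> C \<and> (\<forall>j. \<bar>fst (RS k i) j - Z k j\<bar> \<le> 1 / real (Suc k)) \<and>
                 (\<forall>j. \<bar>snd (RS k i) j - Z k j\<bar> \<le> 1 / real (Suc k)) \<and> label (fst (RS k i)) i \<noteq> label (snd (RS k i)) i"
    by (subst choice_iff[symmetric])+ blast
  then obtain RS where RS0: "\<forall>k i. i < n \<longrightarrow> fst (RS k i) \<in> C \<and> snd (RS k i) \<in> C \<and> (\<forall>j. \<bar>fst (RS k i) j - Z k j\<bar> \<le> 1 / real (Suc k)) \<and>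
                 (\<forall>j. \<bar>snd (RS k i) j - Z k j\<bar> \<le> 1 / real (Suc k)) \<and> label (fst (RS k i)) i \<noteq> label (snd (RS k i)) i"
    by blast
  define R where "R k i = fst (RS k i)" for k i
  define S where "S k i = snd (RS k i)" for k i
  have RS: "\<And>k i. i < n \<Longrightarrow> R k i \<in> C" "\<And>k i. i < n \<Longrightarrow> S k i \<in> C"
    "\<And>k i j. i < n \<Longrightarrow> \<bar>R k i j - Z k j\<bar> \<le> 1 / real (Suc k)"
    "\<And>k i j. i < n \<Longrightarrow> \<bar>S k i j - Z k j\<bar> \<le> 1 / real (Suc k)"
    "\<And>k i. i < n \<Longrightarrow> label (R k i) i \<noteq> label (S k i) i"
    using RS0 unfolding R_def S_def by blast+
  have "seq_compact C" unfolding C_def by (intro compact_imp_seq_compact compact_cube_nat)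
  then obtain z \<sigma> where z: "z \<in> C" "strict_mono \<sigma>" "(Z \<circ> \<sigma>) \<longlonglongrightarrow> z"
    using Z1 seq_compactE by metis
  have inv0: "(\<lambda>k. 1 / real (Suc (\<sigma> k))) \<longlonglongrightarrow> 0"
  proof -
    have "(\<lambda>k. 1 / real (Suc k)) \<longlonglongrightarrow> 0"
      using LIMSEQ_inverse_real_of_nat by (simp add: inverse_eq_divide)
    from LIMSEQ_subseq_LIMSEQ[OF this z(2)] show ?thesis by (simp add: o_def)
  qed
  have Zj: "(\<lambda>k. Z (\<sigma> k) j) \<longlonglongrightarrow> z j" for j
    using z(3) unfolding tendsto_fun_iff by (simp add: o_def)
  have near: "(\<lambda>k. W k) \<longlonglongrightarrow> z"
    if "\<And>k j. \<bar>W k j - Z (\<sigma> k) j\<bar> \<le> 1 / real (Suc (\<sigma> k))" for W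
    unfolding tendsto_fun_iff
  proof
    fix j
    have "(\<lambda>k. W k j - Z (\<sigma> k) j) \<longlonglongrightarrow> 0"
    proof (rule Lim_null_comparison[OF _ inv0])
      show "\<forall>\<^sub>F k in sequentially. norm (W k j - Z (\<sigma> k) j) \<le> 1 / real (Suc (\<sigma> k))"
        using that by (simp add: always_eventually)
    qed
    from tendsto_add[OF this Zj[of j]] show "(\<lambda>k. W k j) \<longlonglongrightarrow> z j" by simp
  qed
  have fix_i: "f z i = z i" if "i < n" for i
  proof -
    have Rl: "(\<lambda>k. R (\<sigma> k) i) \<longlonglongrightarrow> z" by (rule near) (rule RS(3)[OF \<open>i<n\<close>])
    have Sl: "(\<lambda>k. S (\<sigma> k) i) \<longlonglongrightarrow> z" by (rule near) (rule RS(4)[OF \<open>i<n\<close>])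
    have fR: "(\<lambda>k. f (R (\<sigma> k) i)) \<longlonglongrightarrow> f z"
      by (rule continuous_on_tendsto_compose[OF cont Rl z(1)]) (use RS(1) \<open>i<n\<close> in auto)
    have fS: "(\<lambda>k. f (S (\<sigma> k) i)) \<longlonglongrightarrow> f z"
      by (rule continuous_on_tendsto_compose[OF cont Sl z(1)]) (use RS(2) \<open>i<n\<close> in auto)
    have fRi: "(\<lambda>k. f (R (\<sigma> k) i) i) \<longlonglongrightarrow> f z i" using fR unfolding tendsto_fun_iff by blast
    have fSi: "(\<lambda>k. f (S (\<sigma> k) i) i) \<longlonglongrightarrow> f z i" using fS unfolding tendsto_fun_iff by blast
    have Ri: "(\<lambda>k. R (\<sigma> k) i i) \<longlonglongrightarrow> z i" using Rl unfolding tendsto_fun_iff by blast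
    have Si: "(\<lambda>k. S (\<sigma> k) i i) \<longlonglongrightarrow> z i" using Sl unfolding tendsto_fun_iff by blast
    have L1: "(\<lambda>k. \<bar>f (R (\<sigma> k) i) i - R (\<sigma> k) i i\<bar>) \<longlonglongrightarrow> \<bar>f z i - z i\<bar>"
      by (intro tendsto_intros fRi Ri)
    have L2: "(\<lambda>k. \<bar>f (S (\<sigma> k) i) i - f (R (\<sigma> k) i) i\<bar> + \<bar>S (\<sigma> k) i i - R (\<sigma> k) i i\<bar>) \<longlonglongrightarrow>
       \<bar>f z i - f z i\<bar> + \<bar>z i - z i\<bar>"
      by (intro tendsto_intros fRi Ri fSi Si)
    have "\<bar>f z i - z i\<bar> \<le> \<bar>f z i - f z i\<bar> + \<bar>z i - z i\<bar>"
    proof (rule LIMSEQ_le[OF L1 L2], intro exI allI impI)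
      fix k
      show "\<bar>f (R (\<sigma> k) i) i - R (\<sigma> k) i i\<bar> \<le> \<bar>f (S (\<sigma> k) i) i - f (R (\<sigma> k) i) i\<bar> + \<bar>S (\<sigma> k) i i - R (\<sigma> k) i i\<bar>"
        by (rule lem1[OF RS(1) RS(2) \<open>i<n\<close> RS(5)]) (rule \<open>i<n\<close>)+
    qed
    then show ?thesis by simp
  qed
  have "f z = z"
  proof
    fix i show "f z i = z i"
      using fix_i fCo[OF z(1)] z(1) unfolding C_def by (cases "i < n") auto
  qed
  then show ?thesis using z(1) by blast
qed



lemma upd_profiles: "x \<in> profiles n P \<Longrightarrow> i \<in> {1..n} \<Longrightarrow> v \<in> P i \<Longrightarrow> x(i := v) \<in> profiles n P"
  unfolding profiles_def by (auto simp: PiE_def Pi_def extensional_def)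

lemma profiles_eq: "profiles n P = PiE UNIV (\<lambda>i. if i \<in> {1..n} then P i else {undefined})"
  unfolding profiles_def by (auto simp: PiE_def Pi_def extensional_def)

lemma compact_profiles:
  fixes P :: "nat \<Rightarrow> 'b::topological_space set"
  assumes "\<forall>i\<in>{1..n}. compact (P i)" shows "compact (profiles n P)"
proof -
  have "compactin (product_topology (\<lambda>i. euclidean) UNIV) (PiE UNIV (\<lambda>i. if i \<in> {1..n} then P i else {undefined::'b}))"
    by (subst compactin_PiE) (use assms in auto)
  then show ?thesis unfolding profiles_eq by (simp add: euclidean_product_topology)
qed

lemma profiles_ne: "\<forall>i\<in>{1..n}. P i \<noteq> {} \<Longrightarrow> profiles n P \<noteq> {}"
  unfolding profiles_def by (simp add: PiE_eq_empty_iff)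

lemma cont_upd:
  fixes h :: "'x::topological_space \<Rightarrow> nat \<Rightarrow> 'b::topological_space"
  assumes "continuous_on S g" "continuous_on S h"
  shows "continuous_on S (\<lambda>x. (h x)(i := g x))"
proof (rule continuous_on_coordinatewise_then_product)
  fix j
  show "continuous_on S (\<lambda>x. ((h x)(i := g x)) j)"
  proof (cases "j = i")
    case True then show ?thesis using assms(1) by simp
  next
    case False then show ?thesis using continuous_on_product_then_coordinatewise[OF assms(2)] by simp
  qed
qed

lemma unif_cont_crit:
  fixes g :: "'x::metric_space \<Rightarrow> real"
  assumes "\<And>e. e > 0 \<Longrightarrow> \<exists>d>0. \<forall>x\<in>X. \<forall>x'\<in>X. dist x' x < d \<longrightarrow> \<bar>g x' - g x\<bar> \<le> e"
  shows "continuous_on X g"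
  unfolding continuous_on_iff
proof (intro ballI allI impI)
  fix x and e :: real assume "x \<in> X" "e > 0"
  then obtain d where "d > 0" "\<forall>x\<in>X. \<forall>x'\<in>X. dist x' x < d \<longrightarrow> \<bar>g x' - g x\<bar> \<le> e/2"
    using assms[of "e/2"] by auto
  then have d: "d > 0" "\<And>x'. x' \<in> X \<Longrightarrow> dist x' x < d \<Longrightarrow> \<bar>g x' - g x\<bar> \<le> e/2"
    using \<open>x \<in> X\<close> by auto
  show "\<exists>d>0. \<forall>x'\<in>X. dist x' x < d \<longrightarrow> dist (g x') (g x) < e"
  proof (intro exI[of _ d] conjI ballI impI d(1))
    fix x' assume "x' \<in> X" "dist x' x < d"
    from d(2)[OF this] \<open>e > 0\<close> show "dist (g x') (g x) < e" by (simp add: dist_real_def)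
  qed
qed

lemma inf_sup_cont:
  fixes F :: "'a::metric_space \<times> 'x::metric_space \<Rightarrow> real"
  assumes A: "compact A" "A \<noteq> {}" and X: "compact X" and F: "continuous_on (A \<times> X) F"
  shows "continuous_on X (\<lambda>x. INF a\<in>A. F (a, x))" "continuous_on X (\<lambda>x. SUP a\<in>A. F (a, x))"
proof -
  have uc: "uniformly_continuous_on (A \<times> X) F"
    by (intro compact_uniformly_continuous F compact_Times A X)
  have "bounded (F ` (A \<times> X))" by (intro compact_imp_bounded compact_continuous_image F compact_Times A X)
  then obtain B where B: "\<And>p. p \<in> A \<times> X \<Longrightarrow> \<bar>F p\<bar> \<le> B" unfolding bounded_real by blast
  have bb: "bdd_below ((\<lambda>a. F (a, x)) ` A)" "bdd_above ((\<lambda>a. F (a, x)) ` A)" if "x \<in> X" for x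
  proof -
    have "\<And>a. a \<in> A \<Longrightarrow> -B \<le> F (a, x)" "\<And>a. a \<in> A \<Longrightarrow> F (a, x) \<le> B"
      using B[of "(_, x)"] that by (auto simp: abs_le_iff) (smt (verit) B SigmaI that)
    then show "bdd_below ((\<lambda>a. F (a, x)) ` A)" "bdd_above ((\<lambda>a. F (a, x)) ` A)"
      by (auto intro!: bdd_belowI2 bdd_aboveI2)
  qed
  have key: "\<exists>d>0. \<forall>x\<in>X. \<forall>x'\<in>X. dist x' x < d \<longrightarrow>
      \<bar>(INF a\<in>A. F (a, x')) - (INF a\<in>A. F (a, x))\<bar> \<le> e \<and> \<bar>(SUP a\<in>A. F (a, x')) - (SUP a\<in>A. F (a, x))\<bar> \<le> e"
    if "e > 0" for e
  proof -
    obtain d where d: "d > 0" "\<And>p p'. p \<in> A \<times> X \<Longrightarrow> p' \<in> A \<times> X \<Longrightarrow> dist p' p < d \<Longrightarrow> dist (F p') (F p) < e"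
      using uc[unfolded uniformly_continuous_on_def, rule_format, OF \<open>e>0\<close>] by blast
    show ?thesis
    proof (intro exI[of _ d] conjI ballI impI d(1))
      fix x x' assume xx: "x \<in> X" "x' \<in> X" "dist x' x < d"
      have close: "\<bar>F (a, x') - F (a, x)\<bar> < e" if "a \<in> A" for a
        using d(2)[of "(a, x)" "(a, x')"] xx that by (simp add: dist_Pair_Pair dist_real_def)
      have i1: "(INF a\<in>A. F (a, x')) - e \<le> (INF a\<in>A. F (a, x))"
        by (rule cINF_greatest[OF A(2)]) (smt (verit) cINF_lower[OF bb(1)[OF xx(2)]] close)
      have i2: "(INF a\<in>A. F (a, x)) - e \<le> (INF a\<in>A. F (a, x'))"
        by (rule cINF_greatest[OF A(2)]) (smt (verit) cINF_lower[OF bb(1)[OF xx(1)]] close)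
      have s1: "(SUP a\<in>A. F (a, x')) \<le> (SUP a\<in>A. F (a, x)) + e"
        by (rule cSUP_least[OF A(2)]) (smt (verit) cSUP_upper[OF _ bb(2)[OF xx(1)]] close)
      have s2: "(SUP a\<in>A. F (a, x)) \<le> (SUP a\<in>A. F (a, x')) + e"
        by (rule cSUP_least[OF A(2)]) (smt (verit) cSUP_upper[OF _ bb(2)[OF xx(2)]] close)
      show "\<bar>(INF a\<in>A. F (a, x')) - (INF a\<in>A. F (a, x))\<bar> \<le> e" using i1 i2 by linarith
      show "\<bar>(SUP a\<in>A. F (a, x')) - (SUP a\<in>A. F (a, x))\<bar> \<le> e" using s1 s2 by linarith
    qed
  qed
  show "continuous_on X (\<lambda>x. INF a\<in>A. F (a, x))"
    by (rule unif_cont_crit) (use key in blast)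
  show "continuous_on X (\<lambda>x. SUP a\<in>A. F (a, x))"
    by (rule unif_cont_crit) (use key in blast)
qed



lemma game_facts:
  fixes P0 :: "'a::metric_space set" and P :: "nat \<Rightarrow> 'b::metric_space set"
  assumes "game n P0 P J"
  shows "compact P0" "P0 \<noteq> {}" "compact (profiles n P)" "profiles n P \<noteq> {}"
    "\<And>i. i \<in> {1..n} \<Longrightarrow> P i \<noteq> {}" "\<And>i. i \<in> {1..n} \<Longrightarrow> compact (P i)"
    "\<And>i. i \<in> {0..n} \<Longrightarrow> continuous_on (P0 \<times> profiles n P) (\<lambda>p. J i (fst p) (snd p))"
    "\<And>i. i \<in> {0..n} \<Longrightarrow> \<exists>B. \<forall>a\<in>P0. \<forall>x\<in>profiles n P. \<bar>J i a x\<bar> \<le> B"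
    "\<And>i x. i \<in> {0..n} \<Longrightarrow> x \<in> profiles n P \<Longrightarrow> continuous_on P0 (\<lambda>a. J i a x)"
proof -
  show c0: "compact P0" "P0 \<noteq> {}" using assms unfolding game_def by auto
  show c1: "compact (profiles n P)" using assms unfolding game_def by (intro compact_profiles) auto
  show "profiles n P \<noteq> {}" using assms unfolding game_def by (intro profiles_ne) auto
  show "\<And>i. i \<in> {1..n} \<Longrightarrow> P i \<noteq> {}" "\<And>i. i \<in> {1..n} \<Longrightarrow> compact (P i)"
    using assms unfolding game_def by auto
  show cj: "continuous_on (P0 \<times> profiles n P) (\<lambda>p. J i (fst p) (snd p))" if "i \<in> {0..n}" for i
    using assms that unfolding game_def by (simp add: case_prod_beta')
  show "\<exists>B. \<forall>a\<in>P0. \<forall>x\<in>profiles n P. \<bar>J i a x\<bar> \<le> B" if "i \<in> {0..n}" for i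
  proof -
    have "bounded ((\<lambda>p. J i (fst p) (snd p)) ` (P0 \<times> profiles n P))"
      by (intro compact_imp_bounded compact_continuous_image cj[OF that] compact_Times c0 c1)
    then obtain B where "\<forall>y\<in>(\<lambda>p. J i (fst p) (snd p)) ` (P0 \<times> profiles n P). \<bar>y\<bar> \<le> B"
      unfolding bounded_real by blast
    then show ?thesis by force
  qed
  show "continuous_on P0 (\<lambda>a. J i a x)" if "i \<in> {0..n}" "x \<in> profiles n P" for i x
  proof -
    have "continuous_on P0 ((\<lambda>p. J i (fst p) (snd p)) \<circ> (\<lambda>a. (a, x)))"
      by (rule continuous_on_compose) (auto intro!: continuous_intros continuous_on_subset[OF cj[OF that(1)]] simp: that(2))
    then show ?thesis by (simp add: o_def)
  qed
qed

lemma nash_in_B: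
  fixes P0 :: "'a::metric_space set" and P :: "nat \<Rightarrow> 'b::metric_space set"
  assumes g: "game n P0 P J" and inc: "incentive n P0 P \<beta>" and w: "w \<in> NashSet n P J \<beta>"
  shows "(\<beta> w, w) \<in> Bset n P0 P J"
proof -
  have wX: "w \<in> profiles n P" using w unfolding NashSet_def by auto
  have bw: "\<beta> w \<in> P0" using inc wX unfolding incentive_def by auto
  have "(SUP v\<in>P i. INF z\<in>P0. J i z (w(i := v))) \<le> J i (\<beta> w) w" if i: "i \<in> {1..n}" for i
  proof (rule cSUP_least)
    show "P i \<noteq> {}" using game_facts(5)[OF g i] .
    fix v assume v: "v \<in> P i"
    have wv: "w(i := v) \<in> profiles n P" by (rule upd_profiles[OF wX i v])
    obtain B where B: "\<forall>a\<in>P0. \<forall>x\<in>profiles n P. \<bar>J i a x\<bar> \<le> B" using game_facts(8)[OF g, of i] i by auto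
    have bdd: "bdd_below ((\<lambda>z. J i z (w(i := v))) ` P0)"
      by (rule bdd_belowI2[of _ "-B"]) (use B wv in force)
    have "(INF z\<in>P0. J i z (w(i := v))) \<le> J i (\<beta> (w(i := v))) (w(i := v))"
      by (rule cINF_lower[OF bdd]) (use inc wv in \<open>auto simp: incentive_def\<close>)
    also have "\<dots> \<le> J i (\<beta> w) w" using w i v unfolding NashSet_def by auto
    finally show "(INF z\<in>P0. J i z (w(i := v))) \<le> J i (\<beta> w) w" .
  qed
  then show ?thesis unfolding Bset_def using bw wX by auto
qed

lemma B_nash:
  fixes P0 :: "'a::metric_space set" and P :: "nat \<Rightarrow> 'b::metric_space set"
  assumes g: "game n P0 P J" and B: "(w0, w) \<in> Bset n P0 P J"
  shows "\<exists>\<beta>. incentive n P0 P \<beta> \<and> \<beta> w = w0 \<and> w \<in> NashSet n P J \<beta>"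
proof -
  have w0: "w0 \<in> P0" and wX: "w \<in> profiles n P"
    and wB: "\<And>i. i \<in> {1..n} \<Longrightarrow> (SUP v\<in>P i. INF z\<in>P0. J i z (w(i := v))) \<le> J i w0 w"
    using B unfolding Bset_def by auto
  define good where "good x z \<longleftrightarrow> z \<in> P0 \<and> (\<forall>i\<in>{1..n}. x = w(i := x i) \<longrightarrow> (\<forall>z'\<in>P0. J i z x \<le> J i z' x))" for x z
  define \<beta> where "\<beta> x = (if x = w then w0 else SOME z. good x z)" for x
  have ex: "\<exists>z. good x z" if xX: "x \<in> profiles n P" and xw: "x \<noteq> w" for x
  proof (cases "\<exists>i\<in>{1..n}. x = w(i := x i)")
    case False
    then show ?thesis using game_facts(2)[OF g] unfolding good_def by auto
  next
    case True
    then obtain i where i: "i \<in> {1..n}" "x = w(i := x i)" by blast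
    have uniq: "j = i" if "j \<in> {1..n}" "x = w(j := x j)" for j
    proof (rule ccontr)
      assume "j \<noteq> i"
      then have "x i = w i" using arg_cong[OF that(2), of "\<lambda>f. f i"] by simp
      then have "x = w" using i(2) by simp
      then show False using xw by simp
    qed
    obtain z where z: "z \<in> P0" "\<forall>z'\<in>P0. J i z x \<le> J i z' x"
      using continuous_attains_inf[OF game_facts(1,2)[OF g] game_facts(9)[OF g _ xX, of i]] i(1) by force
    then show ?thesis unfolding good_def using uniq by (intro exI[of _ z]) blast
  qed
  have inc: "incentive n P0 P \<beta>"
    unfolding incentive_def
  proof
    fix x assume xX: "x \<in> profiles n P"
    show "\<beta> x \<in> P0"
    proof (cases "x = w")
      case True then show ?thesis using w0 by (simp add: \<beta>_def)
    next
      case False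
      have "good x (SOME z. good x z)" by (rule someI_ex[OF ex[OF xX False]])
      then show ?thesis using False unfolding \<beta>_def good_def by simp
    qed
  qed
  have nash: "w \<in> NashSet n P J \<beta>"
    unfolding NashSet_def
  proof (intro CollectI conjI ballI wX)
    fix i v assume i: "i \<in> {1..n}" and v: "v \<in> P i"
    show "J i (\<beta> (w(i := v))) (w(i := v)) \<le> J i (\<beta> w) w"
    proof (cases "w(i := v) = w")
      case True then show ?thesis by simp
    next
      case False
      have wv: "w(i := v) \<in> profiles n P" by (rule upd_profiles[OF wX i v])
      have gd: "good (w(i := v)) (\<beta> (w(i := v)))"
        unfolding \<beta>_def using False someI_ex[OF ex[OF wv False]] by simp
      have gd1: "\<beta> (w(i := v)) \<in> P0" and gd2: "\<forall>j\<in>{1..n}. w(i := v) = w(j := (w(i := v)) j) \<longrightarrow>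
          (\<forall>z'\<in>P0. J j (\<beta> (w(i := v))) (w(i := v)) \<le> J j z' (w(i := v)))"
        using gd unfolding good_def by blast+
      have "w(i := v) = w(i := (w(i := v)) i)" by simp
      then have z2: "\<forall>z'\<in>P0. J i (\<beta> (w(i := v))) (w(i := v)) \<le> J i z' (w(i := v))"
        using bspec[OF gd2 i] by blast
      note z = gd1 z2
      obtain B where B: "\<forall>a\<in>P0. \<forall>x\<in>profiles n P. \<bar>J i a x\<bar> \<le> B" using game_facts(8)[OF g, of i] i by auto
      have "J i (\<beta> (w(i := v))) (w(i := v)) \<le> (INF z\<in>P0. J i z (w(i := v)))"
        by (rule cINF_greatest[OF game_facts(2)[OF g]]) (use z in auto)
      also have "\<dots> \<le> (SUP v\<in>P i. INF z\<in>P0. J i z (w(i := v)))"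
      proof (rule cSUP_upper[OF v])
        show "bdd_above ((\<lambda>v. INF z\<in>P0. J i z (w(i := v))) ` P i)"
        proof (rule bdd_aboveI2[where M=B])
          fix u assume u: "u \<in> P i"
          obtain a where a: "a \<in> P0" using game_facts(2)[OF g] by blast
          have bdd: "bdd_below ((\<lambda>z. J i z (w(i := u))) ` P0)"
            by (rule bdd_belowI2[of _ "-B"]) (use B upd_profiles[OF wX i u] in force)
          have "(INF z\<in>P0. J i z (w(i := u))) \<le> J i a (w(i := u))" by (rule cINF_lower[OF bdd a])
          also have "\<dots> \<le> B" using B a upd_profiles[OF wX i u] by force
          finally show "(INF z\<in>P0. J i z (w(i := u))) \<le> B" .
        qed
      qed
      also have "\<dots> \<le> J i w0 w" by (rule wB[OF i])
      also have "\<dots> = J i (\<beta> w) w" by (simp add: \<beta>_def)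
      finally show ?thesis .
    qed
  qed
  show ?thesis using inc nash by (intro exI[of _ \<beta>]) (simp add: \<beta>_def)
qed

lemma part1:
  fixes P0 :: "'a::metric_space set" and P :: "nat \<Rightarrow> 'b::metric_space set"
  assumes g: "game n P0 P J" and st: "inv_stackelberg n P0 P J \<alpha> u"
  shows "maximizes_on_B n P0 P J (\<alpha> u) u"
proof -
  have inc: "incentive n P0 P \<alpha>" and un: "u \<in> NashSet n P J \<alpha>"
    and eq: "ereal (J 0 (\<alpha> u) u) = (SUP \<beta>\<in>{\<beta>. incentive n P0 P \<beta>}. SUP w\<in>NashSet n P J \<beta>. ereal (J 0 (\<beta> w) w))"
    using st unfolding inv_stackelberg_def by auto
  have "J 0 w0 w \<le> J 0 (\<alpha> u) u" if wB: "(w0, w) \<in> Bset n P0 P J" for w0 w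
  proof -
    obtain \<beta> where b: "incentive n P0 P \<beta>" "\<beta> w = w0" "w \<in> NashSet n P J \<beta>"
      using B_nash[OF g wB] by blast
    have "ereal (J 0 w0 w) \<le> (SUP w\<in>NashSet n P J \<beta>. ereal (J 0 (\<beta> w) w))"
      using SUP_upper[OF b(3), of "\<lambda>w. ereal (J 0 (\<beta> w) w)"] b(2) by simp
    also have "\<dots> \<le> (SUP \<beta>\<in>{\<beta>. incentive n P0 P \<beta>}. SUP w\<in>NashSet n P J \<beta>. ereal (J 0 (\<beta> w) w))"
      using b by (intro SUP_upper) simp
    finally show ?thesis unfolding eq[symmetric] by simp
  qed
  then show ?thesis unfolding maximizes_on_B_def using nash_in_B[OF g inc un] by auto
qed

lemma part2:
  fixes P0 :: "'a::metric_space set" and P :: "nat \<Rightarrow> 'b::metric_space set"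
  assumes g: "game n P0 P J" and mx: "maximizes_on_B n P0 P J u0 u"
  shows "\<exists>\<alpha>. \<alpha> u = u0 \<and> inv_stackelberg n P0 P J \<alpha> u"
proof -
  have B: "(u0, u) \<in> Bset n P0 P J" and mx': "\<And>w0 w. (w0, w) \<in> Bset n P0 P J \<Longrightarrow> J 0 w0 w \<le> J 0 u0 u"
    using mx unfolding maximizes_on_B_def by auto
  obtain \<alpha> where a: "incentive n P0 P \<alpha>" "\<alpha> u = u0" "u \<in> NashSet n P J \<alpha>"
    using B_nash[OF g B] by blast
  have le: "(SUP \<beta>\<in>{\<beta>. incentive n P0 P \<beta>}. SUP w\<in>NashSet n P J \<beta>. ereal (J 0 (\<beta> w) w)) \<le> ereal (J 0 u0 u)"
  proof (intro SUP_least)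
    fix \<beta> w assume "\<beta> \<in> {\<beta>. incentive n P0 P \<beta>}" "w \<in> NashSet n P J \<beta>"
    then show "ereal (J 0 (\<beta> w) w) \<le> ereal (J 0 u0 u)"
      using mx'[OF nash_in_B[OF g]] by simp
  qed
  have ge: "ereal (J 0 u0 u) \<le> (SUP \<beta>\<in>{\<beta>. incentive n P0 P \<beta>}. SUP w\<in>NashSet n P J \<beta>. ereal (J 0 (\<beta> w) w))"
  proof -
    have "ereal (J 0 u0 u) \<le> (SUP w\<in>NashSet n P J \<alpha>. ereal (J 0 (\<alpha> w) w))"
      using SUP_upper[OF a(3), of "\<lambda>w. ereal (J 0 (\<alpha> w) w)"] a(2) by simp
    also have "\<dots> \<le> (SUP \<beta>\<in>{\<beta>. incentive n P0 P \<beta>}. SUP w\<in>NashSet n P J \<beta>. ereal (J 0 (\<beta> w) w))"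
      using a by (intro SUP_upper) simp
    finally show ?thesis .
  qed
  show ?thesis using a le ge unfolding inv_stackelberg_def by (intro exI[of _ \<alpha>]) auto
qed



lemma cont_coord [continuous_intros]: "continuous_on S (\<lambda>x::'i \<Rightarrow> 'b::topological_space. x i)"
  by (rule continuous_on_subset[OF continuous_on_product_coordinates]) simp

lemma cu1: "continuous_on S (\<lambda>p::('b::topological_space \<times> (nat \<Rightarrow> 'b)). (snd p)(i := fst p))"
  by (rule cont_upd) (intro continuous_on_fst continuous_on_snd continuous_on_id)+
lemma cu2:
  fixes x :: "nat \<Rightarrow> 'b::topological_space"
  shows "continuous_on S (\<lambda>v. x(i := v))"
  using cont_upd[of S "\<lambda>v. v" "\<lambda>v. x" i] by (simp add: continuous_on_id)
lemma cu3: "continuous_on S (\<lambda>x::nat \<Rightarrow> 'b::topological_space. x(i := c))"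
  by (rule cont_upd) (intro continuous_on_id continuous_on_const)+

lemma finite_min_radius:
  assumes "finite I" "\<And>i. i \<in> I \<Longrightarrow> \<exists>d>0. \<forall>x. D x < d \<longrightarrow> R i x"
  shows "\<exists>d>(0::real). \<forall>x. D x < d \<longrightarrow> (\<forall>i\<in>I. R i x)"
  using assms
proof (induction I rule: finite_induct)
  case empty then show ?case by (intro exI[of _ 1]) auto
next
  case (insert j I)
  obtain d1 where d1: "d1 > 0" "\<forall>x. D x < d1 \<longrightarrow> (\<forall>i\<in>I. R i x)" using insert by auto
  obtain d2 where d2: "d2 > 0" "\<forall>x. D x < d2 \<longrightarrow> R j x" using insert.prems by auto
  show ?case using d1 d2 by (intro exI[of _ "min d1 d2"]) auto
qed

lemma eps_nash:
  fixes Q :: "nat \<Rightarrow> 'd::euclidean_space set" and G :: "nat \<Rightarrow> (nat \<Rightarrow> 'd) \<Rightarrow> real"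
  assumes Q: "\<And>i. i \<in> {1..m} \<Longrightarrow> compact (Q i) \<and> Q i \<noteq> {} \<and> convex (Q i)"
    and Gc: "\<And>i. i \<in> {1..m} \<Longrightarrow> continuous_on (profiles m Q) (G i)"
    and qc: "\<And>i w. i \<in> {1..m} \<Longrightarrow> w \<in> profiles m Q \<Longrightarrow> quasiconcave_on (Q i) (\<lambda>v. G i (w(i := v)))"
    and e: "e > 0"
  shows "\<exists>x\<in>profiles m Q. \<forall>i\<in>{1..m}. \<forall>v\<in>Q i. G i (x(i := v)) \<le> G i x + e"
proof -
  define X where "X = profiles m Q"
  have Xc: "compact X" unfolding X_def using Q by (intro compact_profiles) auto
  have Xne: "X \<noteq> {}" unfolding X_def using Q by (intro profiles_ne) auto
  have upd: "x(i := v) \<in> X" if "x \<in> X" "i \<in> {1..m}" "v \<in> Q i" for x i v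
    using upd_profiles that unfolding X_def by metis
  have updx: "x(i := x i) = x" for x :: "nat \<Rightarrow> 'd" and i by simp
  define M where "M i x = (SUP v\<in>Q i. G i (x(i := v)))" for i x
  have Fc: "continuous_on (Q i \<times> X) (\<lambda>p. G i ((snd p)(i := fst p)))" if i: "i \<in> {1..m}" for i
    by (rule continuous_on_compose2[OF Gc[OF i, folded X_def]])
       (auto intro!: cu1 simp: upd[OF _ i])
  have Mc: "continuous_on X (M i)" if i: "i \<in> {1..m}" for i
    using inf_sup_cont(2)[OF _ _ Xc Fc[OF i]] Q[OF i] unfolding M_def by simp
  have Gb: "\<exists>B. \<forall>x\<in>X. \<bar>G i x\<bar> \<le> B" if i: "i \<in> {1..m}" for i
  proof -
    have "bounded (G i ` X)" by (intro compact_imp_bounded compact_continuous_image Gc[OF i, folded X_def] Xc)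
    then show ?thesis unfolding bounded_real by blast
  qed
  have Mge: "G i (x(i := v)) \<le> M i x" if xX: "x \<in> X" and iI: "i \<in> {1..m}" and vQ: "v \<in> Q i" for x i v
  proof -
    obtain B where B: "\<forall>x\<in>X. \<bar>G i x\<bar> \<le> B" using Gb[OF iI] by blast
    have "bdd_above ((\<lambda>v. G i (x(i := v))) ` Q i)"
      by (rule bdd_aboveI2[where M=B]) (use B upd[OF xX iI] in force)
    then show ?thesis unfolding M_def by (rule cSUP_upper[OF vQ])
  qed
  have argmax: "\<exists>b\<in>Q i. G i (x(i := b)) = M i x" if x: "x \<in> X" and i: "i \<in> {1..m}" for x i
  proof -
    have "continuous_on (Q i) (\<lambda>v. G i (x(i := v)))"
      by (rule continuous_on_compose2[OF Gc[OF i, folded X_def]])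
         (auto intro!: cu2 simp: upd[OF x i])
    then obtain b where b: "b \<in> Q i" "\<forall>v\<in>Q i. G i (x(i := v)) \<le> G i (x(i := b))"
      using continuous_attains_sup[of "Q i"] Q[OF i] by blast
    have "M i x \<le> G i (x(i := b))" unfolding M_def using b Q[OF i] by (intro cSUP_least) auto
    then show ?thesis using Mge[OF x i b(1)] b(1) by (intro bexI[of _ b]) auto
  qed
  then obtain Tb where Tb: "\<And>x i. x \<in> X \<Longrightarrow> i \<in> {1..m} \<Longrightarrow> Tb x i \<in> Q i \<and> G i (x(i := Tb x i)) = M i x"
    by metis
  define T where "T x = (\<lambda>i. if i \<in> {1..m} then Tb x i else undefined)" for x
  have TX: "T x \<in> X" if "x \<in> X" for x
    using Tb[OF that] unfolding T_def X_def profiles_def by (auto simp: PiE_def Pi_def extensional_def)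
  have rad: "\<exists>r>0. \<forall>x. dist x y < r \<longrightarrow> (\<forall>i\<in>{1..m}. x \<in> X \<longrightarrow> M i x - e < G i (x(i := T y i)))"
    if y: "y \<in> X" for y
  proof (rule finite_min_radius)
    fix i assume i: "i \<in> {1..m}"
    have c: "continuous_on X (\<lambda>x. M i x - G i (x(i := T y i)))"
      by (intro continuous_on_diff Mc[OF i] continuous_on_compose2[OF Gc[OF i, folded X_def]] cu3)
         (use i in \<open>auto simp: upd[OF _ i] T_def Tb[OF y i]\<close>)
    obtain d where d: "d > 0" "\<forall>x\<in>X. dist x y < d \<longrightarrow> dist (M i x - G i (x(i := T y i))) (M i y - G i (y(i := T y i))) < e"
      using c[unfolded continuous_on_iff] y e by blast
    have "M i y - G i (y(i := T y i)) = 0" using Tb[OF y i] i by (simp add: T_def)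
    then show "\<exists>d>0. \<forall>x. dist x y < d \<longrightarrow> x \<in> X \<longrightarrow> M i x - e < G i (x(i := T y i))"
      using d by (intro exI[of _ d]) (auto simp: dist_real_def)
  qed simp
  then obtain r where r: "\<And>y. y \<in> X \<Longrightarrow> r y > 0"
    "\<And>y x i. y \<in> X \<Longrightarrow> x \<in> X \<Longrightarrow> dist x y < r y \<Longrightarrow> i \<in> {1..m} \<Longrightarrow> M i x - e < G i (x(i := T y i))"
    by metis
  have "X \<subseteq> (\<Union>y\<in>X. ball y (r y))" using r(1) by force
  then obtain D where D: "D \<subseteq> X" "finite D" "X \<subseteq> (\<Union>y\<in>D. ball y (r y))"
    using compactE_image[OF Xc, of X "\<lambda>y. ball y (r y)"] by blast
  define N where "N = card D"
  obtain h where h: "bij_betw h {0..<N} D" using ex_bij_betw_nat_finite[OF D(2)] unfolding N_def by blast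
  have hD: "h k \<in> D" if "k < N" for k using h that unfolding bij_betw_def by auto
  have cover: "\<exists>k<N. dist x (h k) < r (h k)" if xX: "x \<in> X" for x
  proof -
    obtain y where "y \<in> D" "dist x y < r y" using D(3) xX by (force simp: dist_commute)
    moreover obtain k where "k < N" "h k = y" using h \<open>y \<in> D\<close> unfolding bij_betw_def by force
    ultimately show ?thesis by blast
  qed
  have Npos: "N > 0" using cover Xne by force
  define z where "z k = T (h k)" for k
  have zX: "z k \<in> X" if "k < N" for k using TX hD D(1) that unfolding z_def by blast
  define \<psi> where "\<psi> k x = max 0 (r (h k) - dist x (h k))" for k x
  define S where "S x = (\<Sum>k<N. \<psi> k x)" for x
  have Spos: "S x > 0" if xX: "x \<in> X" for x
  proof -
    obtain k where "k < N" "dist x (h k) < r (h k)" using cover[OF xX] by blast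
    then show ?thesis unfolding S_def by (intro sum_pos2[of _ k]) (auto simp: \<psi>_def)
  qed
  define comb where "comb l = (\<lambda>j. if j \<in> {1..m} then (\<Sum>k<N. l k *\<^sub>R z k j) + (1 - (\<Sum>k<N. l k)) *\<^sub>R z 0 j else undefined)"
    for l :: "nat \<Rightarrow> real"
  have comb_X: "comb l \<in> X" if lp: "\<And>k. 0 \<le> l k" and ls: "(\<Sum>k<N. l k) \<le> 1" for l
  proof -
    have "comb l j \<in> Q j" if j: "j \<in> {1..m}" for j
    proof -
      define a where "a k = (if k < N then l k else 1 - (\<Sum>k<N. l k))" for k
      define y where "y k = (if k < N then z k j else z 0 j)" for k
      have zj: "z k j \<in> Q j" if "k < N" for k using zX[OF that] j unfolding X_def profiles_def by auto
      have "(\<Sum>k<Suc N. a k *\<^sub>R y k) \<in> Q j"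
      proof (rule convex_sum)
        show "convex (Q j)" using Q[OF j] by blast
        show "(\<Sum>k<Suc N. a k) = 1" by (simp add: a_def)
        show "0 \<le> a k" if "k \<in> {..<Suc N}" for k using lp ls by (simp add: a_def)
        show "y k \<in> Q j" if "k \<in> {..<Suc N}" for k using zj Npos by (simp add: y_def)
      qed simp
      moreover have "(\<Sum>k<Suc N. a k *\<^sub>R y k) = comb l j"
        using j by (simp add: a_def y_def comb_def)
      ultimately show ?thesis by simp
    qed
    moreover have "comb l \<in> extensional {1..m}" by (simp add: comb_def extensional_def)
    ultimately show ?thesis unfolding X_def profiles_def by (simp add: PiE_iff)
  qed
  have comb_c: "continuous_on UNIV comb"
  proof (rule continuous_on_coordinatewise_then_product)
    fix j
    show "continuous_on UNIV (\<lambda>l. comb l j)"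
    proof (cases "j \<in> {1..m}")
      case True
      have "continuous_on UNIV (\<lambda>l::nat\<Rightarrow>real. (\<Sum>k<N. l k *\<^sub>R z k j) + (1 - (\<Sum>k<N. l k)) *\<^sub>R z 0 j)"
        by (intro continuous_intros)
      moreover have "(\<lambda>l. comb l j) = (\<lambda>l. (\<Sum>k<N. l k *\<^sub>R z k j) + (1 - (\<Sum>k<N. l k)) *\<^sub>R z 0 j)"
        using True by (simp add: comb_def)
      ultimately show ?thesis by metis
    next
      case False
      then have "(\<lambda>l. comb l j) = (\<lambda>l. undefined)" by (auto simp: comb_def)
      then show ?thesis by (metis continuous_on_const)
    qed
  qed
  define rt where "rt t = (\<lambda>k. t k / max 1 (\<Sum>j<N. t j))" for t :: "nat \<Rightarrow> real"
  define C where "C = {t::nat\<Rightarrow>real. (\<forall>i<N. 0 \<le> t i \<and> t i \<le> 1) \<and> (\<forall>i\<ge>N. t i = 0)}"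
  have rt_ok: "(\<forall>k. 0 \<le> rt t k) \<and> (\<Sum>k<N. rt t k) \<le> 1" if "t \<in> C" for t
  proof -
    have t0: "0 \<le> t k" for k using that unfolding C_def by (cases "k < N") auto
    have "(\<Sum>k<N. rt t k) = (\<Sum>k<N. t k) / max 1 (\<Sum>j<N. t j)"
      unfolding rt_def by (simp add: sum_divide_distrib)
    also have "\<dots> \<le> 1" by (simp add: divide_le_eq_1 less_max_iff_disj)
    finally show ?thesis using t0 unfolding rt_def by simp
  qed
  define \<Phi> where "\<Phi> t = (\<lambda>k. if k < N then \<psi> k (comb (rt t)) / S (comb (rt t)) else 0)" for t
  have \<psi>0: "0 \<le> \<psi> k x" for k x unfolding \<psi>_def by simp
  have \<psi>S: "\<psi> k x \<le> S x" if "k < N" for k x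
    unfolding S_def by (rule member_le_sum) (use that \<psi>0 in auto)
  have combrt: "comb (rt t) \<in> X" if "t \<in> C" for t using rt_ok[OF that] by (intro comb_X) auto
  have \<Phi>C: "\<Phi> ` C \<subseteq> C"
  proof
    fix u assume "u \<in> \<Phi> ` C"
    then obtain t where t: "t \<in> C" "u = \<Phi> t" by blast
    have "S (comb (rt t)) > 0" by (rule Spos[OF combrt[OF t(1)]])
    then show "u \<in> C" unfolding t(2) C_def \<Phi>_def using \<psi>0 \<psi>S by auto
  qed
  have rtc: "continuous_on UNIV rt"
  proof (rule continuous_on_coordinatewise_then_product)
    fix k show "continuous_on UNIV (\<lambda>t. rt t k)"
      unfolding rt_def by (intro continuous_intros) auto
  qed
  have crc: "continuous_on C (\<lambda>t. comb (rt t))"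
    by (rule continuous_on_compose2[OF comb_c continuous_on_subset[OF rtc]]) auto
  have \<Phi>c: "continuous_on C \<Phi>"
  proof (rule continuous_on_coordinatewise_then_product)
    fix k show "continuous_on C (\<lambda>t. \<Phi> t k)"
    proof (cases "k < N")
      case True
      have "continuous_on C (\<lambda>t. \<psi> k (comb (rt t)) / S (comb (rt t)))"
        unfolding \<psi>_def S_def
        by (intro continuous_intros crc) (use Spos combrt in \<open>force simp: \<psi>_def S_def\<close>)
      then show ?thesis using True by (simp add: \<Phi>_def)
    qed (simp add: \<Phi>_def)
  qed
  obtain t where t: "t \<in> C" "\<Phi> t = t" using brouwer_nat[OF \<Phi>c[unfolded C_def] \<Phi>C[unfolded C_def]] C_def by blast
  have Sxx: "S (comb (rt t)) > 0" by (rule Spos[OF combrt[OF t(1)]])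
  have tk: "t k = \<psi> k (comb (rt t)) / S (comb (rt t))" if "k < N" for k
    using fun_cong[OF t(2), of k] that by (simp add: \<Phi>_def)
  have sum1: "(\<Sum>k<N. t k) = 1"
  proof -
    have "(\<Sum>k<N. t k) = (\<Sum>k<N. \<psi> k (comb (rt t))) / S (comb (rt t))"
      using tk by (simp add: sum_divide_distrib)
    also have "\<dots> = 1" using Sxx unfolding S_def by simp
    finally show ?thesis .
  qed
  have rtt: "rt t = t" unfolding rt_def sum1 by simp
  define x where "x = comb t"
  have xX: "x \<in> X" using combrt[OF t(1)] rtt unfolding x_def by simp
  have tk': "t k = \<psi> k x / S x" if "k < N" for k using tk[OF that] rtt unfolding x_def by simp
  have Sx: "S x > 0" by (rule Spos[OF xX])
  have t0: "0 \<le> t k" for k using t(1) unfolding C_def by (cases "k < N") auto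
  define A where "A = {k. k < N \<and> 0 < t k}"
  have Afin: "finite A" unfolding A_def by simp
  have Asub: "A \<subseteq> {..<N}" unfolding A_def by auto
  have Azero: "t k = 0" if "k \<in> {..<N} - A" for k using that t0[of k] unfolding A_def by auto
  have sumA: "(\<Sum>k\<in>A. t k) = 1"
    using sum.mono_neutral_left[OF _ Asub, of t] Azero sum1 by simp
  show ?thesis
  proof (intro bexI[of _ x] ballI)
    show "x \<in> profiles m Q" using xX unfolding X_def .
    fix i v assume i: "i \<in> {1..m}" and v: "v \<in> Q i"
    define L where "L = {w \<in> Q i. M i x - e \<le> G i (x(i := w))}"
    have convL: "convex L"
      unfolding convex_def
    proof (intro ballI allI impI)
      fix a b :: 'd and u w :: real
      assume a: "a \<in> L" and b: "b \<in> L" and uw: "0 \<le> u" "0 \<le> w" "u + w = 1"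
      have u: "u = 1 - w" using uw by simp
      have inQ: "u *\<^sub>R a + w *\<^sub>R b \<in> Q i"
        using Q[OF i] a b uw unfolding L_def convex_def by blast
      have "min (G i (x(i := a))) (G i (x(i := b))) \<le> G i (x(i := (1 - w) *\<^sub>R a + w *\<^sub>R b))"
        using qc[OF i xX[unfolded X_def]] a b uw unfolding quasiconcave_on_def L_def by auto
      then show "u *\<^sub>R a + w *\<^sub>R b \<in> L" using a b inQ unfolding L_def u by auto
    qed
    have zL: "z k i \<in> L" if "k \<in> A" for k
    proof -
      have k: "k < N" "0 < t k" using that unfolding A_def by auto
      have "\<psi> k x > 0" using k tk'[OF k(1)] Sx by (simp add: zero_less_divide_iff)
      then have "dist x (h k) < r (h k)" unfolding \<psi>_def by simp
      then have "M i x - e < G i (x(i := T (h k) i))"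
        by (intro r(2) hD[OF k(1), THEN subsetD[OF D(1)]] xX i)
      moreover have "z k i \<in> Q i" using zX[OF k(1)] i unfolding X_def profiles_def by auto
      ultimately show ?thesis unfolding L_def z_def by auto
    qed
    have inL: "(\<Sum>k\<in>A. t k *\<^sub>R z k i) \<in> L"
      by (rule convex_sum[OF Afin convL sumA]) (use t0 zL in auto)
    have "x i = (\<Sum>k<N. t k *\<^sub>R z k i)" unfolding x_def comb_def using i sum1 by simp
    also have "\<dots> = (\<Sum>k\<in>A. t k *\<^sub>R z k i)"
      using sum.mono_neutral_left[OF _ Asub, of "\<lambda>k. t k *\<^sub>R z k i"] Azero by simp
    finally have "x i \<in> L" using inL by simp
    then have "M i x - e \<le> G i x" unfolding L_def by simp
    moreover have "G i (x(i := v)) \<le> M i x" by (rule Mge[OF xX i v])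
    ultimately show "G i (x(i := v)) \<le> G i x + e" by simp
  qed
qed



lemma part3:
  fixes Q0 :: "'c::metric_space set" and Q :: "nat \<Rightarrow> 'd::euclidean_space set"
    and K :: "nat \<Rightarrow> 'c \<Rightarrow> (nat \<Rightarrow> 'd) \<Rightarrow> real"
  assumes g: "game m Q0 Q K" and conv: "\<forall>i\<in>{1..m}. convex (Q i)"
    and qc: "\<forall>i\<in>{1..m}. \<forall>v0\<in>Q0. \<forall>w\<in>profiles m Q. quasiconcave_on (Q i) (\<lambda>v. K i v0 (w(i := v)))"
  shows "\<exists>\<alpha> u. inv_stackelberg m Q0 Q K \<alpha> u"
proof -
  define X where "X = profiles m Q"
  note gf = game_facts[OF g, folded X_def]
  obtain c where c: "c \<in> Q0" using gf(2) by blast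
  have upd: "x(i := v) \<in> X" if "x \<in> X" "i \<in> {1..m}" "v \<in> Q i" for x i v
    using upd_profiles that unfolding X_def by metis
  have Kc: "continuous_on X (\<lambda>x. K i a x)" if i: "i \<in> {0..m}" and a: "a \<in> Q0" for i a
  proof -
    have "continuous_on X ((\<lambda>p. K i (fst p) (snd p)) \<circ> (\<lambda>x. (a, x)))"
      by (rule continuous_on_compose) (auto intro!: continuous_intros continuous_on_subset[OF gf(7)[OF i]] simp: a)
    then show ?thesis by (simp add: o_def)
  qed
  have Kcu: "continuous_on X (\<lambda>x. K i a (x(i := v)))" if i: "i \<in> {1..m}" and a: "a \<in> Q0" and v: "v \<in> Q i" for i a v
    by (rule continuous_on_compose2[OF Kc[OF _ a] cu3, of i]) (use i upd[OF _ i v] in auto)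
  have "\<exists>x\<in>X. \<forall>i\<in>{1..m}. \<forall>v\<in>Q i. K i c (x(i := v)) \<le> K i c x + 1 / real (Suc k)" for k
    unfolding X_def
  proof (rule eps_nash)
    show "\<And>i. i \<in> {1..m} \<Longrightarrow> compact (Q i) \<and> Q i \<noteq> {} \<and> convex (Q i)" using gf(5,6) conv by auto
    show "\<And>i. i \<in> {1..m} \<Longrightarrow> continuous_on (profiles m Q) (K i c)"
      using Kc c unfolding X_def by (metis atLeastAtMost_iff le0)
    show "\<And>i w. i \<in> {1..m} \<Longrightarrow> w \<in> profiles m Q \<Longrightarrow> quasiconcave_on (Q i) (\<lambda>v. K i c (w(i := v)))"
      using qc c by blast
  qed simp
  then obtain xs where xs: "\<And>k. xs k \<in> X" "\<And>k i v. i \<in> {1..m} \<Longrightarrow> v \<in> Q i \<Longrightarrow> K i c ((xs k)(i := v)) \<le> K i c (xs k) + 1 / real (Suc k)"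
    by metis
  have "seq_compact X" by (intro compact_imp_seq_compact gf(3))
  then obtain xx \<sigma> where xx: "xx \<in> X" "strict_mono \<sigma>" "(xs \<circ> \<sigma>) \<longlonglongrightarrow> xx"
    using xs(1) seq_compactE by metis
  have inv0: "(\<lambda>k. 1 / real (Suc (\<sigma> k))) \<longlonglongrightarrow> 0"
  proof -
    have "(\<lambda>k. 1 / real (Suc k)) \<longlonglongrightarrow> 0"
      using LIMSEQ_inverse_real_of_nat by (simp add: inverse_eq_divide)
    from LIMSEQ_subseq_LIMSEQ[OF this xx(2)] show ?thesis by (simp add: o_def)
  qed
  have lim: "(\<lambda>k. xs (\<sigma> k)) \<longlonglongrightarrow> xx" using xx(3) by (simp add: o_def)
  have nash: "K i c (xx(i := v)) \<le> K i c xx" if i: "i \<in> {1..m}" and v: "v \<in> Q i" for i v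
  proof -
    have i0: "i \<in> {0..m}" using i by auto
    have L1: "(\<lambda>k. K i c ((xs (\<sigma> k))(i := v))) \<longlonglongrightarrow> K i c (xx(i := v))"
      by (rule continuous_on_tendsto_compose[OF Kcu[OF i c v] lim xx(1)]) (use xs(1) in auto)
    have L2': "(\<lambda>k. K i c (xs (\<sigma> k))) \<longlonglongrightarrow> K i c xx"
      by (rule continuous_on_tendsto_compose[OF Kc[OF i0 c] lim xx(1)]) (use xs(1) in auto)
    have L2: "(\<lambda>k. K i c (xs (\<sigma> k)) + 1 / real (Suc (\<sigma> k))) \<longlonglongrightarrow> K i c xx + 0"
      by (rule tendsto_add[OF L2' inv0])
    show ?thesis
      by (rule LIMSEQ_le[OF L1 L2, simplified]) (use xs(2)[OF i v] in auto)
  qed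
  define H where "H i x = (INF w\<in>Q0. K i w x)" for i x
  have Kb: "\<exists>B. \<forall>a\<in>Q0. \<forall>x\<in>X. \<bar>K i a x\<bar> \<le> B" if "i \<in> {1..m}" for i
    using gf(8)[of i] that by auto
  have Hle: "H i x \<le> K i a x" if iI: "i \<in> {1..m}" and xX: "x \<in> X" and aQ: "a \<in> Q0" for i x a
  proof -
    obtain B where B: "\<forall>a\<in>Q0. \<forall>x\<in>X. \<bar>K i a x\<bar> \<le> B" using Kb[OF iI] by blast
    have "bdd_below ((\<lambda>w. K i w x) ` Q0)"
      by (rule bdd_belowI2[of _ "-B"]) (use B \<open>x \<in> X\<close> in force)
    then show ?thesis unfolding H_def by (rule cINF_lower[OF _ \<open>a \<in> Q0\<close>])
  qed
  have bddH: "bdd_above ((\<lambda>v. H i (x(i := v))) ` Q i)" if i: "i \<in> {1..m}" and x: "x \<in> X" for i x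
  proof -
    obtain B where B: "\<forall>a\<in>Q0. \<forall>x\<in>X. \<bar>K i a x\<bar> \<le> B" using Kb[OF i] by blast
    show ?thesis
    proof (rule bdd_aboveI2[where M=B])
      fix v assume v: "v \<in> Q i"
      have "H i (x(i := v)) \<le> K i c (x(i := v))" by (rule Hle[OF i upd[OF x i v] c])
      also have "\<dots> \<le> B" using B c upd[OF x i v] by force
      finally show "H i (x(i := v)) \<le> B" .
    qed
  qed
  have Bchar: "(a, x) \<in> Bset m Q0 Q K \<longleftrightarrow> a \<in> Q0 \<and> x \<in> X \<and> (\<forall>i\<in>{1..m}. \<forall>v\<in>Q i. H i (x(i := v)) \<le> K i a x)"
    for a x
  proof
    assume "(a, x) \<in> Bset m Q0 Q K"
    then have ax: "a \<in> Q0" "x \<in> X" and s: "\<And>i. i \<in> {1..m} \<Longrightarrow> (SUP v\<in>Q i. H i (x(i := v))) \<le> K i a x"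
      unfolding Bset_def X_def H_def by auto
    have "H i (x(i := v)) \<le> K i a x" if "i \<in> {1..m}" "v \<in> Q i" for i v
      using cSUP_upper[OF that(2) bddH[OF that(1) ax(2)]] s[OF that(1)] by linarith
    then show "a \<in> Q0 \<and> x \<in> X \<and> (\<forall>i\<in>{1..m}. \<forall>v\<in>Q i. H i (x(i := v)) \<le> K i a x)" using ax by blast
  next
    assume r: "a \<in> Q0 \<and> x \<in> X \<and> (\<forall>i\<in>{1..m}. \<forall>v\<in>Q i. H i (x(i := v)) \<le> K i a x)"
    have "(SUP v\<in>Q i. H i (x(i := v))) \<le> K i a x" if "i \<in> {1..m}" for i
      by (rule cSUP_least) (use r gf(5)[OF that] that in auto)
    then show "(a, x) \<in> Bset m Q0 Q K" using r unfolding Bset_def X_def H_def by auto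
  qed
  have cc: "(c, xx) \<in> Bset m Q0 Q K"
  proof -
    have "H i (xx(i := v)) \<le> K i c xx" if iI: "i \<in> {1..m}" and vQ: "v \<in> Q i" for i v
      using Hle[OF iI upd[OF xx(1) iI vQ] c] nash[OF iI vQ] by linarith
    then show ?thesis unfolding Bchar using c xx(1) by blast
  qed
  have Hc: "continuous_on X (H i)" if i: "i \<in> {1..m}" for i
  proof -
    have "continuous_on (Q0 \<times> X) (\<lambda>p. K i (fst p) (snd p))" using gf(7)[of i] i by auto
    from inf_sup_cont(1)[OF gf(1,2,3) this] show ?thesis unfolding H_def by simp
  qed
  define g where "g iv p = K (fst iv) (fst p) (snd p) - H (fst iv) ((snd p)(fst iv := snd iv))" for iv p
  have gc: "continuous_on (Q0 \<times> X) (g iv)" if iv: "iv \<in> Sigma {1..m} Q" for iv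
  proof -
    have i: "fst iv \<in> {1..m}" "snd iv \<in> Q (fst iv)" using iv by auto
    have c1: "continuous_on (Q0 \<times> X) (\<lambda>p. K (fst iv) (fst p) (snd p))" using gf(7)[of "fst iv"] i by auto
    have c2: "continuous_on (Q0 \<times> X) (\<lambda>p. H (fst iv) ((snd p)(fst iv := snd iv)))"
      by (rule continuous_on_compose2[OF Hc[OF i(1)] continuous_on_compose2[OF cu3 continuous_on_snd[OF continuous_on_id]]])
         (use upd[OF _ i] in auto)
    show ?thesis unfolding g_def by (intro continuous_on_diff c1 c2)
  qed
  have closedQX: "closed (Q0 \<times> X)" by (intro compact_imp_closed compact_Times gf(1,3))
  have Beq: "Bset m Q0 Q K = (Q0 \<times> X) \<inter> (\<Inter>iv\<in>Sigma {1..m} Q. (Q0 \<times> X) \<inter> g iv -` {0..})"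
  proof (intro set_eqI)
    fix p :: "'c \<times> (nat \<Rightarrow> 'd)"
    obtain a x where p: "p = (a, x)" by fastforce
    show "p \<in> Bset m Q0 Q K \<longleftrightarrow> p \<in> (Q0 \<times> X) \<inter> (\<Inter>iv\<in>Sigma {1..m} Q. (Q0 \<times> X) \<inter> g iv -` {0..})"
      unfolding p Bchar by (auto simp: g_def)
  qed
  have clg: "closed ((Q0 \<times> X) \<inter> g iv -` {0..})" if ivS: "iv \<in> Sigma {1..m} Q" for iv
    by (rule continuous_closed_preimage[OF gc[OF ivS] closedQX]) simp
  have Bcomp: "compact (Bset m Q0 Q K)"
    unfolding Beq
    by (intro compact_Int_closed compact_Times gf(1,3) closed_INT) (use clg in auto)
  have J0c: "continuous_on (Bset m Q0 Q K) (\<lambda>p. K 0 (fst p) (snd p))"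
    by (rule continuous_on_subset[OF gf(7)[of 0]]) (auto simp: Bchar)
  obtain p where p: "p \<in> Bset m Q0 Q K" "\<And>q. q \<in> Bset m Q0 Q K \<Longrightarrow> K 0 (fst q) (snd q) \<le> K 0 (fst p) (snd p)"
    using continuous_attains_sup[OF Bcomp _ J0c] cc by blast
  have "maximizes_on_B m Q0 Q K (fst p) (snd p)"
    unfolding maximizes_on_B_def using p by auto
  from part2[OF g this] obtain \<alpha> where "\<alpha> (snd p) = fst p \<and> inv_stackelberg m Q0 Q K \<alpha> (snd p)"
    by (elim exE)
  then have "inv_stackelberg m Q0 Q K \<alpha> (snd p)" by (rule conjunct2)
  then show ?thesis by blast
qed

theorem theorem2:
  fixes n :: nat and P0 :: "'a::metric_space set" and P :: "nat \<Rightarrow> 'b::metric_space set"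
    and J :: "nat \<Rightarrow> 'a \<Rightarrow> (nat \<Rightarrow> 'b) \<Rightarrow> real"
    and m :: nat and Q0 :: "'c::metric_space set" and Q :: "nat \<Rightarrow> 'd::euclidean_space set"
    and K :: "nat \<Rightarrow> 'c \<Rightarrow> (nat \<Rightarrow> 'd) \<Rightarrow> real"
  shows "(game n P0 P J \<longrightarrow>
            (\<forall>\<alpha> u. inv_stackelberg n P0 P J \<alpha> u \<longrightarrow> maximizes_on_B n P0 P J (\<alpha> u) u))
       \<and> (game n P0 P J \<longrightarrow>
            (\<forall>u0 u. maximizes_on_B n P0 P J u0 u \<longrightarrow>
               (\<exists>\<alpha>. \<alpha> u = u0 \<and> inv_stackelberg n P0 P J \<alpha> u)))
       \<and> (game m Q0 Q K \<and> (\<forall>i\<in>{1..m}. convex (Q i)) \<and>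
           (\<forall>i\<in>{1..m}. \<forall>v0\<in>Q0. \<forall>w\<in>profiles m Q.
              quasiconcave_on (Q i) (\<lambda>v. K i v0 (w(i := v))))
           \<longrightarrow> (\<exists>\<alpha> u. inv_stackelberg m Q0 Q K \<alpha> u))"
proof (intro conjI impI allI)
  fix \<alpha> u assume "game n P0 P J" "inv_stackelberg n P0 P J \<alpha> u"
  then show "maximizes_on_B n P0 P J (\<alpha> u) u" by (rule part1)
next
  fix u0 u assume "game n P0 P J" "maximizes_on_B n P0 P J u0 u"
  then show "\<exists>\<alpha>. \<alpha> u = u0 \<and> inv_stackelberg n P0 P J \<alpha> u" by (rule part2)
next
  assume "game m Q0 Q K \<and> (\<forall>i\<in>{1..m}. convex (Q i)) \<and>
           (\<forall>i\<in>{1..m}. \<forall>v0\<in>Q0. \<forall>w\<in>profiles m Q. quasiconcave_on (Q i) (\<lambda>v. K i v0 (w(i := v))))"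
  then show "\<exists>\<alpha> u. inv_stackelberg m Q0 Q K \<alpha> u" by (elim conjE) (rule part3)
qed


end
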